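(* Let $p$ be a prime, $m\ge 1$ and $r$ integers with $r^p\equiv 1 \pmod m$, and let $G=\langle x, y\mid x^p=y^m=1,\ x^{-1}yx=y^r\rangle$ (so $G\cong C_p\ltimes C_m$ and $|G|=pm$). Assume that $p$ is the smallest prime divisor of $|G|$ and that $\gcd(p(r-1), m)=1$. Then $\mathsf d(G)=m+p-2$.
   Context: A sequence over a finite multiplicatively written group $G$ is a finite unordered list of elements of $G$ with repetition allowed; its length is the number of terms. For a sequence $S=g_1\cdot\ldots\cdot g_\ell$, $\pi(S)=\{g_{\tau(1)}\cdots g_{\tau(\ell)}:\tau \text{ a permutation of } [1,\ell]\}$. $S$ is product-one if $1\in\pi(S)$. The small Davenport constant $\mathsf d(G)$ is the maximal integer $\ell$ such that there is a sequence of length $\ell$ over $G$ having no nonempty product-one subsequence. *)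

theory Defs
  imports "HOL-Algebra.Generated_Groups" "HOL-Library.Multiset" "HOL-Number_Theory.Cong"
begin

text \<open>Sequences over G are finite multisets of elements of the carrier.\<close>

definition list_prod :: "('a, 'b) monoid_scheme \<Rightarrow> 'a list \<Rightarrow> 'a" where
  "list_prod G xs = foldr (\<lambda>a b. a \<otimes>\<^bsub>G\<^esub> b) xs \<one>\<^bsub>G\<^esub>"

definition product_one :: "('a, 'b) monoid_scheme \<Rightarrow> 'a multiset \<Rightarrow> bool" where
  "product_one G S \<longleftrightarrow> (\<exists>xs. mset xs = S \<and> list_prod G xs = \<one>\<^bsub>G\<^esub>)"

definition product_one_free :: "('a, 'b) monoid_scheme \<Rightarrow> 'a multiset \<Rightarrow> bool" where
  "product_one_free G S \<longleftrightarrow> (\<forall>T. T \<subseteq># S \<and> T \<noteq> {#} \<longrightarrow> \<not> product_one G T)"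

definition small_davenport :: "('a, 'b) monoid_scheme \<Rightarrow> nat" where
  "small_davenport G = (GREATEST l. \<exists>S. set_mset S \<subseteq> carrier G \<and> size S = l \<and> product_one_free G S)"

end

theory Submission
  imports Defs
begin


locale frob = group G for G :: "('a, 'b) monoid_scheme" (structure) +
  fixes p m :: nat and r :: int and x y :: 'a
  assumes p_prime: "prime p" and m_pos: "m \<ge> 1" and r_cong: "[r ^ p = 1] (mod int m)"
    and x_c: "x \<in> carrier G" and y_c: "y \<in> carrier G"
    and gen: "generate G {x, y} = carrier G"
    and xp: "x [^] p = \<one>" and ym: "y [^] m = \<one>"
    and rel: "inv x \<otimes> y \<otimes> x = y [^] r"
    and fin: "finite (carrier G)" and card_G: "card (carrier G) = p * m"
    and gcd_cond: "gcd (int p * (r - 1)) (int m) = 1"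
begin

lemma p_gt1: "p > 1" using p_prime prime_gt_1_nat by blast

lemma cancel1: "a \<in> carrier G \<Longrightarrow> z \<in> carrier G \<Longrightarrow> a \<otimes> (inv a \<otimes> z) = z"
  by (simp add: m_assoc[symmetric])
lemma cancel2: "a \<in> carrier G \<Longrightarrow> z \<in> carrier G \<Longrightarrow> inv a \<otimes> (a \<otimes> z) = z"
  by (simp add: m_assoc[symmetric])

lemma conj_hom: "(\<lambda>g. inv x \<otimes> g \<otimes> x) \<in> hom G G"
proof -
  have "inv x \<otimes> (a \<otimes> b) \<otimes> x = (inv x \<otimes> a \<otimes> x) \<otimes> (inv x \<otimes> b \<otimes> x)"
    if "a \<in> carrier G" "b \<in> carrier G" for a b
  proof -
    show ?thesis using that x_c by (simp add: m_assoc cancel1)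
  qed
  then show ?thesis unfolding hom_def using x_c by auto
qed

lemma conj_y: "inv x \<otimes> y [^] (k::int) \<otimes> x = y [^] (r * k)"
proof -
  have "inv x \<otimes> y [^] k \<otimes> x = (inv x \<otimes> y \<otimes> x) [^] k"
    using hom_int_pow[OF conj_hom y_c is_group is_group] by simp
  also have "\<dots> = y [^] (r * k)" using rel y_c int_pow_pow by simp
  finally show ?thesis .
qed

lemma yx: "y [^] (k::int) \<otimes> x = x \<otimes> y [^] (r * k)"
proof -
  have "x \<otimes> (inv x \<otimes> y [^] k \<otimes> x) = y [^] k \<otimes> x"
    using x_c y_c by (simp add: m_assoc[symmetric])
  then show ?thesis using conj_y by simp
qed

lemma yxn: "y [^] (k::int) \<otimes> x [^] (d::nat) = x [^] d \<otimes> y [^] (r ^ d * k)"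
proof (induction d arbitrary: k)
  case 0 then show ?case using y_c by simp
next
  case (Suc d)
  have "y [^] k \<otimes> x [^] Suc d = (y [^] k \<otimes> x [^] d) \<otimes> x"
    using x_c y_c by (simp add: m_assoc)
  also have "\<dots> = x [^] d \<otimes> (y [^] (r ^ d * k) \<otimes> x)" using Suc x_c y_c by (simp add: m_assoc)
  also have "\<dots> = x [^] d \<otimes> (x \<otimes> y [^] (r * (r ^ d * k)))" by (simp add: yx)
  also have "\<dots> = x [^] Suc d \<otimes> y [^] (r ^ Suc d * k)"
    using x_c y_c by (simp add: m_assoc[symmetric] mult.assoc nat_pow_Suc2)
  finally show ?case .
qed

lemma rep_mult: "(x [^] (b::nat) \<otimes> y [^] (k::int)) \<otimes> (x [^] (d::nat) \<otimes> y [^] (j::int))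
   = x [^] (b + d) \<otimes> y [^] (r ^ d * k + j)"
proof -
  have "(x [^] b \<otimes> y [^] k) \<otimes> (x [^] d \<otimes> y [^] j) = x [^] b \<otimes> (y [^] k \<otimes> x [^] d) \<otimes> y [^] j"
    using x_c y_c by (simp add: m_assoc)
  also have "\<dots> = x [^] b \<otimes> (x [^] d \<otimes> y [^] (r ^ d * k)) \<otimes> y [^] j"
    by (simp add: yxn)
  also have "\<dots> = (x [^] b \<otimes> x [^] d) \<otimes> (y [^] (r ^ d * k) \<otimes> y [^] j)"
    using x_c y_c by (simp add: m_assoc)
  also have "\<dots> = x [^] (b + d) \<otimes> y [^] (r ^ d * k + j)"
    using x_c y_c by (simp add: nat_pow_mult int_pow_mult)
  finally show ?thesis .
qed

lemma x_mod: "x [^] (b::nat) = x [^] (b mod p)"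
proof -
  have "x [^] b = x [^] (p * (b div p) + b mod p)" by simp
  also have "\<dots> = x [^] (b mod p)"
    using x_c by (simp only: nat_pow_mult[symmetric] nat_pow_pow[symmetric] xp) (simp add: nat_pow_one)
  finally show ?thesis .
qed

lemma y_mod: "y [^] (k::int) = y [^] (k mod int m)"
proof -
  have "y [^] k = y [^] (int m * (k div int m) + k mod int m)" by simp
  also have "\<dots> = y [^] (k mod int m)"
    using y_c by (simp only: int_pow_mult[OF y_c] int_pow_pow[OF y_c, symmetric] int_pow_int ym) simp
  finally show ?thesis .
qed

lemma gen_rep: "g \<in> generate G {x, y} \<Longrightarrow> \<exists>b::nat. \<exists>k::int. g = x [^] b \<otimes> y [^] k"
proof (induction g rule: generate.induct)
  case one
  then show ?case by (rule exI[of _ 0], rule exI[of _ 0]) simp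
next
  case (incl h)
  then show ?case
  proof
    assume "h = x" then show ?thesis using x_c
      by (intro exI[of _ 1] exI[of _ 0]) simp
  next
    assume "h \<in> {y}" then show ?thesis using y_c
      by (intro exI[of _ 0] exI[of _ 1]) simp
  qed
next
  case (inv h)
  then show ?case
  proof
    assume hx: "h = x"
    have "x [^] (p - 1) \<otimes> x = \<one>"
      using x_c p_gt1 xp by (metis Suc_diff_1 less_trans nat_pow_Suc zero_less_one)
    then have "inv x = x [^] (p - 1)" using x_c by (simp add: inv_equality)
    then show ?thesis using hx x_c by (intro exI[of _ "p - 1"] exI[of _ 0]) simp
  next
    assume "h \<in> {y}" then show ?thesis using y_c
      by (intro exI[of _ 0] exI[of _ "-1"]) (simp add: int_pow_neg)
  qed
next
  case (eng h1 h2)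
  then obtain b k d j where "h1 = x [^] (b::nat) \<otimes> y [^] (k::int)" "h2 = x [^] (d::nat) \<otimes> y [^] (j::int)" by blast
  then show ?case using rep_mult by blast
qed

lemma rep: "g \<in> carrier G \<Longrightarrow> \<exists>b<p. \<exists>k. k < m \<and> g = x [^] b \<otimes> y [^] (int k)"
proof -
  assume "g \<in> carrier G"
  then obtain b k where g: "g = x [^] (b::nat) \<otimes> y [^] (k::int)" using gen gen_rep by blast
  have e: "int (nat (k mod int m)) = k mod int m" using m_pos by simp
  have "g = x [^] (b mod p) \<otimes> y [^] (int (nat (k mod int m)))"
    unfolding e using g x_mod[of b] y_mod[of k] by simp
  moreover have "b mod p < p" using p_gt1 by simp
  moreover have "nat (k mod int m) < m" using m_pos by (simp add: nat_less_iff)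
  ultimately show ?thesis by blast
qed

definition fr :: "nat \<times> nat \<Rightarrow> 'a" where "fr bk = x [^] fst bk \<otimes> y [^] (int (snd bk))"

lemma f_image: "fr ` ({0..<p} \<times> {0..<m}) = carrier G"
proof
  show "fr ` ({0..<p} \<times> {0..<m}) \<subseteq> carrier G" using x_c y_c by (auto simp: fr_def)
  show "carrier G \<subseteq> fr ` ({0..<p} \<times> {0..<m})"
  proof
    fix g assume "g \<in> carrier G"
    then obtain b k where "b < p" "k < m" "g = x [^] b \<otimes> y [^] (int k)" using rep by blast
    then have "g = fr (b, k)" "(b, k) \<in> {0..<p} \<times> {0..<m}" unfolding fr_def by auto
    then show "g \<in> fr ` ({0..<p} \<times> {0..<m})" by blast
  qed
qed

lemma f_inj: "inj_on fr ({0..<p} \<times> {0..<m})"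
proof (rule eq_card_imp_inj_on)
  show "finite ({0..<p} \<times> {0..<m})" by simp
  show "card (fr ` ({0..<p} \<times> {0..<m})) = card ({0..<p} \<times> {0..<m})"
    unfolding f_image card_G card_cartesian_product by simp
qed

lemma rep_unique_nat:
  assumes "b < p" "b' < p" "k < m" "k' < m" "x [^] b \<otimes> y [^] (int k) = x [^] b' \<otimes> y [^] (int k')"
  shows "b = b' \<and> k = k'"
proof -
  have "fr (b, k) = fr (b', k')" using assms(5) unfolding fr_def by simp
  moreover have "(b, k) \<in> {0..<p} \<times> {0..<m}" "(b', k') \<in> {0..<p} \<times> {0..<m}" using assms(1-4) by auto
  ultimately have "(b, k) = (b', k')" using inj_onD[OF f_inj] by blast
  then show ?thesis by simp
qed

lemma rep_unique:
  assumes "b < p" "b' < p" "x [^] b \<otimes> y [^] (k::int) = x [^] b' \<otimes> y [^] (k'::int)"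
  shows "b = b' \<and> k mod int m = k' mod int m"
proof -
  have e: "int (nat (k mod int m)) = k mod int m" "int (nat (k' mod int m)) = k' mod int m" using m_pos by simp_all
  have "x [^] b \<otimes> y [^] (int (nat (k mod int m))) = x [^] b' \<otimes> y [^] (int (nat (k' mod int m)))"
    unfolding e using assms(3) y_mod[of k] y_mod[of k'] by simp
  moreover have "nat (k mod int m) < m" "nat (k' mod int m) < m" using m_pos by (auto simp: nat_less_iff)
  ultimately have "b = b' \<and> nat (k mod int m) = nat (k' mod int m)"
    using rep_unique_nat[OF assms(1,2)] by blast
  then show ?thesis using e by metis
qed

lemma y_one_iff: "y [^] (k::int) = \<one> \<longleftrightarrow> int m dvd k"
proof
  assume "y [^] k = \<one>"
  then have "x [^] (0::nat) \<otimes> y [^] k = x [^] (0::nat) \<otimes> y [^] (0::int)" using y_c by simp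
  moreover have "(0::nat) < p" using p_gt1 by simp
  ultimately have "k mod int m = 0 mod int m" using rep_unique by blast
  then show "int m dvd k" by (simp add: mod_eq_0_iff_dvd)
next
  assume "int m dvd k"
  then have "k mod int m = 0" by simp
  then show "y [^] k = \<one>" using y_mod[of k] by simp
qed

end



context frob
begin

definition beta :: "'a \<Rightarrow> nat" where
  "beta g = (THE b. b < p \<and> (\<exists>k::int. g = x [^] b \<otimes> y [^] k))"

lemma beta_rep_eq: assumes "b < p" "g = x [^] b \<otimes> y [^] (k::int)" shows "beta g = b"
  unfolding beta_def
proof (rule the_equality)
  show "b < p \<and> (\<exists>k::int. g = x [^] b \<otimes> y [^] k)" using assms by blast
  fix b' assume "b' < p \<and> (\<exists>k::int. g = x [^] b' \<otimes> y [^] k)"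
  then obtain k' where "b' < p" "g = x [^] b' \<otimes> y [^] (k'::int)" by blast
  then show "b' = b" using rep_unique[of b' b k' k] assms by simp
qed

lemma beta_pow: "beta (x [^] (b::nat) \<otimes> y [^] (k::int)) = b mod p"
proof -
  have "x [^] b \<otimes> y [^] k = x [^] (b mod p) \<otimes> y [^] k" using x_mod[of b] by simp
  moreover have "b mod p < p" using p_gt1 by simp
  ultimately show ?thesis using beta_rep_eq by blast
qed

lemma beta_ex: assumes "g \<in> carrier G" shows "beta g < p \<and> (\<exists>k::int. g = x [^] beta g \<otimes> y [^] k)"
proof -
  obtain b k where "b < p" "k < m" "g = x [^] b \<otimes> y [^] (int k)" using rep assms by blast
  moreover then have "beta g = b" using beta_rep_eq by blast
  ultimately show ?thesis by (intro conjI exI[of _ "int k"]) simp_all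
qed

lemma beta_mult: assumes "g \<in> carrier G" "h \<in> carrier G" shows "beta (g \<otimes> h) = (beta g + beta h) mod p"
proof -
  obtain k j bg bh where "g = x [^] bg \<otimes> y [^] (k::int)" "h = x [^] bh \<otimes> y [^] (j::int)"
    "beta g = bg" "beta h = bh"
    using beta_ex assms by metis
  then have "g \<otimes> h = x [^] (bg + bh) \<otimes> y [^] (r ^ bh * k + j)"
    using rep_mult by simp
  then show ?thesis using beta_pow \<open>beta g = bg\<close> \<open>beta h = bh\<close> by simp
qed

lemma beta_y: "beta (y [^] (k::int)) = 0"
proof -
  have "y [^] k = x [^] (0::nat) \<otimes> y [^] k" using y_c by simp
  then show ?thesis using beta_rep_eq p_gt1 by (metis gr_implies_not0 neq0_conv)
qed

lemma beta_x: "beta x = 1"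
proof -
  have "x = x [^] (1::nat) \<otimes> y [^] (0::int)" using x_c by simp
  then show ?thesis using beta_rep_eq p_gt1 by blast
qed

lemma beta_one: "beta \<one> = 0" using beta_y[of 0] by simp

lemma beta_zero: assumes "g \<in> carrier G" "beta g = 0" shows "\<exists>k::int. g = y [^] k"
  using beta_ex[OF assms(1)] assms(2) x_c y_c by auto

lemma y_comm: "y [^] (a::int) \<otimes> y [^] (c::int) = y [^] c \<otimes> y [^] a"
  using y_c by (simp add: int_pow_mult[symmetric] add.commute)

lemma conj_gen: assumes "g \<in> carrier G" shows "inv g \<otimes> y [^] (k::int) \<otimes> g = y [^] (r ^ beta g * k)"
proof -
  obtain j bg where g: "g = x [^] bg \<otimes> y [^] (j::int)" and bg: "beta g = bg" using beta_ex assms by metis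
  have "y [^] k \<otimes> g = (y [^] k \<otimes> x [^] bg) \<otimes> y [^] j"
    using g x_c y_c by (metis int_pow_closed m_assoc nat_pow_closed)
  also have "\<dots> = x [^] bg \<otimes> (y [^] (r ^ bg * k) \<otimes> y [^] j)"
    using x_c y_c by (simp add: yxn m_assoc)
  also have "\<dots> = x [^] bg \<otimes> (y [^] j \<otimes> y [^] (r ^ bg * k))" by (simp add: y_comm)
  also have "\<dots> = g \<otimes> y [^] (r ^ bg * k)" using g x_c y_c by (simp add: m_assoc)
  finally have e: "y [^] k \<otimes> g = g \<otimes> y [^] (r ^ beta g * k)" using bg by simp
  have "inv g \<otimes> y [^] k \<otimes> g = inv g \<otimes> (y [^] k \<otimes> g)" using assms y_c by (simp add: m_assoc)
  also have "\<dots> = y [^] (r ^ beta g * k)" unfolding e using assms y_c cancel2 by simp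
  finally show ?thesis .
qed

lemma coprime_pow_diff: assumes "0 < e" "e < p" shows "coprime (r ^ e - 1) (int m)"
proof -
  define d where "d = gcd (r ^ e - 1) (int m)"
  have d1: "d dvd r ^ e - 1" "d dvd int m" unfolding d_def by auto
  have c1: "[r ^ e = 1] (mod d)" using d1 by (simp add: cong_iff_dvd_diff)
  have c2: "[r ^ p = 1] (mod d)" using r_cong d1(2) cong_dvd_modulus by blast
  have "coprime e p" using assms p_prime
    by (metis coprime_commute le_eq_less_or_eq not_le prime_imp_coprime_nat dvd_imp_le)
  then obtain u v where uv: "e * u = p * v + 1" using bezout_nat[of e p] assms(1)
    by (auto simp: coprime_iff_gcd_eq_1)
  have "[r ^ (e * u) = 1] (mod d)" using cong_pow[OF c1, of u] by (simp add: power_mult)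
  moreover have "[r ^ (p * v) = 1] (mod d)" using cong_pow[OF c2, of v] by (simp add: power_mult)
  then have "[r ^ (p * v) * r = r] (mod d)" using cong_mult[of _ 1 d r r] by simp
  ultimately have "[1 = r] (mod d)" unfolding uv by (metis cong_sym cong_trans power_add power_one_right)
  then have "d dvd r - 1" by (simp add: cong_iff_dvd_diff dvd_diff_commute)
  then have "d dvd gcd (int p * (r - 1)) (int m)" using d1(2) by simp
  then have "d dvd 1" using gcd_cond by simp
  then have "is_unit d" by simp
  then show ?thesis unfolding d_def by (simp add: coprime_iff_gcd_eq_1)
qed

lemma coprime_r: "coprime r (int m)"
proof -
  have "coprime (1::int) (int m)" by simp
  then have "coprime (r ^ p) (int m)" using r_cong cong_imp_coprime cong_sym by blast
  then show ?thesis using p_gt1 by simp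
qed

lemma key_nt_aux: assumes "b2 < b1" "b1 < p" "int m dvd k * r ^ b1 - k * r ^ b2" shows "int m dvd k"
proof -
  have "k * r ^ b1 - k * r ^ b2 = k * (r ^ b2 * (r ^ (b1 - b2) - 1))"
    using assms(1) by (simp add: algebra_simps power_add[symmetric])
  moreover have "coprime (int m) (r ^ b2 * (r ^ (b1 - b2) - 1))"
    using coprime_pow_diff[of "b1 - b2"] assms coprime_r by (simp add: coprime_commute)
  ultimately show ?thesis using assms(3) coprime_dvd_mult_left_iff by metis
qed

lemma key_nt: assumes "b1 < p" "b2 < p" "b1 \<noteq> b2" "int m dvd k * r ^ b1 - k * r ^ b2" shows "int m dvd k"
proof (cases "b2 < b1")
  case True then show ?thesis using key_nt_aux assms by blast
next
  case False
  then have "b1 < b2" using assms(3) by simp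
  moreover have "int m dvd k * r ^ b2 - k * r ^ b1" using assms(4) by (simp add: dvd_diff_commute)
  ultimately show ?thesis using key_nt_aux assms by blast
qed

end



lemma mset_take_sub: "mset (take n xs) \<subseteq># mset xs"
  by (metis append_take_drop_id mset_append mset_subset_eq_add_left)
lemma mset_drop_sub: "mset (drop n xs) \<subseteq># mset xs"
  by (metis append_take_drop_id mset_append mset_subset_eq_add_right)

context frob
begin

abbreviation lp where "lp \<equiv> list_prod G"

lemma lp_Nil[simp]: "lp [] = \<one>" by (simp add: list_prod_def)
lemma lp_Cons[simp]: "lp (a # xs) = a \<otimes> lp xs" by (simp add: list_prod_def)

lemma lp_closed: "set xs \<subseteq> carrier G \<Longrightarrow> lp xs \<in> carrier G"
  by (induction xs) auto

lemma lp_append: "set xs \<subseteq> carrier G \<Longrightarrow> set ys \<subseteq> carrier G \<Longrightarrow> lp (xs @ ys) = lp xs \<otimes> lp ys"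
  by (induction xs) (auto simp: m_assoc lp_closed)

lemma lp_replicate: "a \<in> carrier G \<Longrightarrow> lp (replicate n a) = a [^] n"
proof (induction n)
  case (Suc n)
  then show ?case using group_commutes_pow[of a a n] by simp
qed simp

lemma beta_lp: "set xs \<subseteq> carrier G \<Longrightarrow> beta (lp xs) = sum_list (map beta xs) mod p"
proof (induction xs)
  case Nil then show ?case using beta_one by simp
next
  case (Cons a xs)
  then have "beta (lp (a # xs)) = (beta a + beta (lp xs)) mod p"
    using beta_mult lp_closed by simp
  also have "\<dots> = (beta a + sum_list (map beta xs) mod p) mod p" using Cons by simp
  also have "\<dots> = sum_list (map beta (a # xs)) mod p" by (simp add: mod_add_right_eq)
  finally show ?case .
qed

definition NN :: "'a set" where "NN = {g. \<exists>k::int. g = y [^] k}"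

lemma NN_carrier: "NN \<subseteq> carrier G" unfolding NN_def using y_c by auto

lemma NN_mult: "u \<in> NN \<Longrightarrow> v \<in> NN \<Longrightarrow> u \<otimes> v \<in> NN"
  unfolding NN_def using y_c by (auto simp: int_pow_mult[symmetric])

lemma NN_comm: "u \<in> NN \<Longrightarrow> v \<in> NN \<Longrightarrow> u \<otimes> v = v \<otimes> u"
  unfolding NN_def using y_comm by auto

lemma NN_one: "\<one> \<in> NN" unfolding NN_def by (intro CollectI exI[of _ 0]) simp

lemma NN_card: "card NN \<le> m"
proof -
  have "NN \<subseteq> (\<lambda>k. y [^] (int k)) ` {0..<m}"
  proof
    fix g assume "g \<in> NN"
    then obtain k where g: "g = y [^] (k::int)" unfolding NN_def by blast
    have e: "int (nat (k mod int m)) = k mod int m" using m_pos by simp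
    have "g = y [^] (int (nat (k mod int m)))" unfolding e g by (rule y_mod)
    moreover have "nat (k mod int m) \<in> {0..<m}" using m_pos by (simp add: nat_less_iff)
    ultimately show "g \<in> (\<lambda>k. y [^] (int k)) ` {0..<m}" by blast
  qed
  then have "card NN \<le> card ((\<lambda>k. y [^] (int k)) ` {0..<m})" by (rule card_mono[rotated]) simp
  also have "\<dots> \<le> m" using card_image_le[of "{0..<m}"] by simp
  finally show ?thesis .
qed

definition smul :: "'a set \<Rightarrow> 'a set \<Rightarrow> 'a set" where
  "smul A B = (\<lambda>(a, b). a \<otimes> b) ` (A \<times> B)"

lemma smul_finite: "finite A \<Longrightarrow> finite B \<Longrightarrow> finite (smul A B)"
  unfolding smul_def by simp

lemma smul_mem: "a \<in> A \<Longrightarrow> b \<in> B \<Longrightarrow> a \<otimes> b \<in> smul A B"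
  unfolding smul_def by force

lemma smul_elim: "c \<in> smul A B \<Longrightarrow> \<exists>a\<in>A. \<exists>b\<in>B. c = a \<otimes> b"
  unfolding smul_def by auto

lemma scherk:
  assumes "finite B" "finite A" "A \<subseteq> NN" "B \<subseteq> NN" "\<one> \<in> A" "\<one> \<in> B"
    "\<forall>a\<in>A. \<forall>b\<in>B. a \<otimes> b = \<one> \<longrightarrow> a = \<one> \<and> b = \<one>"
  shows "card A + card B \<le> card (smul A B) + 1"
  using assms
proof (induction "card B" arbitrary: A B rule: less_induct)
  case less
  show ?case
  proof (cases "\<forall>a\<in>A. \<forall>b\<in>B. a \<otimes> b \<in> A")
    case True
    have "B = {\<one>}"
    proof (rule ccontr)
      assume "B \<noteq> {\<one>}"
      then obtain b where b: "b \<in> B" "b \<noteq> \<one>" using less.prems(6) by blast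
      have bc: "b \<in> carrier G" using b less.prems(4) NN_carrier by blast
      have Ac: "A \<subseteq> carrier G" using less.prems(3) NN_carrier by blast
      have inj: "inj_on (\<lambda>a. a \<otimes> b) A" using inj_on_multc[OF bc] Ac inj_on_subset by blast
      have sub: "(\<lambda>a. a \<otimes> b) ` A \<subseteq> A" using True b by blast
      have "card ((\<lambda>a. a \<otimes> b) ` A) = card A" using card_image[OF inj] .
      then have "(\<lambda>a. a \<otimes> b) ` A = A" using card_subset_eq[OF less.prems(2) sub] by simp
      then have "\<one> \<in> (\<lambda>a. a \<otimes> b) ` A" using less.prems(5) by simp
      then obtain a where "a \<in> A" "\<one> = a \<otimes> b" by (rule imageE)
      then have "a \<in> A" "a \<otimes> b = \<one>" by simp_all
      then show False using less.prems(7) b by blast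
    qed
    moreover have "smul A {\<one>} = A"
    proof -
      have "smul A {\<one>} = (\<lambda>a. a \<otimes> \<one>) ` A" unfolding smul_def by auto
      also have "\<dots> = (\<lambda>a. a) ` A"
        by (rule image_cong) (use less.prems(3) NN_carrier in auto)
      also have "\<dots> = A" by simp
      finally show ?thesis .
    qed
    ultimately show ?thesis by simp
  next
    case False
    then obtain a b0 where ab: "a \<in> A" "b0 \<in> B" "a \<otimes> b0 \<notin> A" by blast
    have ac: "a \<in> NN" using ab less.prems(3) by blast
    have acc: "a \<in> carrier G" using ac NN_carrier by blast
    define A' where "A' = A \<union> (\<lambda>b. a \<otimes> b) ` B"
    define B' where "B' = {b \<in> B. a \<otimes> b \<in> A}"
    have B'sub: "B' \<subseteq> B" unfolding B'_def by blast
    have cardB': "card B' < card B"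
      using ab less.prems(1) B'sub unfolding B'_def by (intro psubset_card_mono) auto
    have finA': "finite A'" "finite B'"
      using less.prems(1,2) finite_subset[OF B'sub less.prems(1)] unfolding A'_def by simp_all
    have A'NN: "A' \<subseteq> NN" unfolding A'_def using less.prems(3,4) ac NN_mult by auto
    have B'NN: "B' \<subseteq> NN" using B'sub less.prems(4) by blast
    have oneA': "\<one> \<in> A'" unfolding A'_def using less.prems(5) by blast
    have oneB': "\<one> \<in> B'" unfolding B'_def using less.prems(6) ab(1) acc by simp
    have cond: "\<forall>a'\<in>A'. \<forall>b'\<in>B'. a' \<otimes> b' = \<one> \<longrightarrow> a' = \<one> \<and> b' = \<one>"
    proof (intro ballI impI)
      fix a' b' assume a': "a' \<in> A'" and b': "b' \<in> B'" and e: "a' \<otimes> b' = \<one>"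
      have b'B: "b' \<in> B" "a \<otimes> b' \<in> A" using b' unfolding B'_def by auto
      show "a' = \<one> \<and> b' = \<one>"
      proof (cases "a' \<in> A")
        case True then show ?thesis using less.prems(7) b'B e by blast
      next
        case False
        then obtain b where b: "b \<in> B" "a' = a \<otimes> b" using a' unfolding A'_def by blast
        have bN: "b \<in> NN" "b' \<in> NN" using b b'B less.prems(4) by auto
        have cs: "a \<in> carrier G" "b \<in> carrier G" "b' \<in> carrier G" using ac bN NN_carrier by auto
        have ab'N: "a \<otimes> b' \<in> NN" using b'B(2) less.prems(3) by blast
        have "a' \<otimes> b' = (a \<otimes> b) \<otimes> b'" using b(2) by simp
        also have "\<dots> = (b \<otimes> a) \<otimes> b'" using NN_comm[OF ac bN(1)] by simp
        also have "\<dots> = b \<otimes> (a \<otimes> b')" using cs by (simp add: m_assoc)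
        also have "\<dots> = (a \<otimes> b') \<otimes> b" using NN_comm[OF bN(1) ab'N] by simp
        finally have "(a \<otimes> b') \<otimes> b = \<one>" using e by simp
        then have "a \<otimes> b' = \<one> \<and> b = \<one>" using less.prems(7) b'B(2) b(1) by blast
        then have "a \<otimes> b' = \<one>" "b = \<one>" by auto
        then have "a = \<one> \<and> b' = \<one>" using less.prems(7) ab(1) b'B(1) by blast
        then show ?thesis using b \<open>b = \<one>\<close> acc by simp
      qed
    qed
    have IH: "card A' + card B' \<le> card (smul A' B') + 1"
      using less.hyps[OF cardB' finA'(2) finA'(1) A'NN B'NN oneA' oneB' cond] .
    have "smul A' B' \<subseteq> smul A B"
    proof
      fix c assume "c \<in> smul A' B'"
      then obtain a' b' where a': "a' \<in> A'" and b': "b' \<in> B'" and c: "c = a' \<otimes> b'"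
        using smul_elim by blast
      have b'B: "b' \<in> B" "a \<otimes> b' \<in> A" using b' unfolding B'_def by auto
      show "c \<in> smul A B"
      proof (cases "a' \<in> A")
        case True then show ?thesis using c b'B smul_mem by blast
      next
        case False
        then obtain b where b: "b \<in> B" "a' = a \<otimes> b" using a' unfolding A'_def by blast
        have bN: "b \<in> NN" "b' \<in> NN" using b b'B less.prems(4) by auto
        have cs: "a \<in> carrier G" "b \<in> carrier G" "b' \<in> carrier G" using ac bN NN_carrier by auto
        have ab'N: "a \<otimes> b' \<in> NN" using b'B(2) less.prems(3) by blast
        have "c = (a \<otimes> b) \<otimes> b'" using c b(2) by simp
        also have "\<dots> = (b \<otimes> a) \<otimes> b'" using NN_comm[OF ac bN(1)] by simp
        also have "\<dots> = b \<otimes> (a \<otimes> b')" using cs by (simp add: m_assoc)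
        also have "\<dots> = (a \<otimes> b') \<otimes> b" using NN_comm[OF bN(1) ab'N] by simp
        finally have "c = (a \<otimes> b') \<otimes> b" .
        then show ?thesis using b'B b smul_mem by blast
      qed
    qed
    then have c1: "card (smul A' B') \<le> card (smul A B)"
      using smul_finite[OF less.prems(2,1)] by (rule card_mono[rotated])
    have "A' = A \<union> (\<lambda>b. a \<otimes> b) ` (B - B')" unfolding A'_def B'_def by auto
    moreover have "A \<inter> (\<lambda>b. a \<otimes> b) ` (B - B') = {}" unfolding B'_def by auto
    ultimately have "card A' = card A + card ((\<lambda>b. a \<otimes> b) ` (B - B'))"
      using less.prems(1,2) by (simp add: card_Un_disjoint)
    moreover have "inj_on (\<lambda>b. a \<otimes> b) (B - B')"
    proof -
      have "B - B' \<subseteq> carrier G" using less.prems(4) NN_carrier by blast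
      then show ?thesis using inj_on_subset[OF inj_on_cmult[OF acc]] by blast
    qed
    ultimately have "card A' = card A + card (B - B')" by (simp add: card_image)
    moreover have "card (B - B') = card B - card B'" using B'sub finA'(2) by (simp add: card_Diff_subset)
    moreover have "card B' \<le> card B" using cardB' by simp
    ultimately show ?thesis using IH c1 by linarith
  qed
qed

end



context frob
begin

lemma mod_add_self_eq: "(a + b) mod p = a \<Longrightarrow> a < p \<Longrightarrow> b < p \<Longrightarrow> b = (0::nat)"
proof -
  assume h: "(a + b) mod p = a" "a < p" "b < p"
  show "b = 0"
  proof (cases "a + b < p")
    case True then show ?thesis using h by simp
  next
    case False
    then have "(a + b) mod p = (a + b - p) mod p" by (intro le_mod_geq) simp
    also have "\<dots> = a + b - p" using h by (intro mod_less) linarith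
    finally have "(a + b) mod p = a + b - p" .
    then show ?thesis using h False by linarith
  qed
qed

lemma block_exists:
  assumes "set ls \<subseteq> carrier G" "p \<le> length ls"
  shows "\<exists>i j. i < j \<and> j \<le> p \<and> beta (lp (take i ls)) = beta (lp (take j ls)) \<and>
    (\<forall>k1 k2. k1 < k2 \<longrightarrow> k2 < j \<longrightarrow> beta (lp (take k1 ls)) \<noteq> beta (lp (take k2 ls)))"
proof -
  define \<sigma> where "\<sigma> k = beta (lp (take k ls))" for k
  have \<sigma>lt: "\<sigma> k < p" for k
    unfolding \<sigma>_def using beta_ex lp_closed assms(1) set_take_subset by (metis subset_trans)
  define P where "P j \<longleftrightarrow> j \<le> p \<and> (\<exists>i<j. \<sigma> i = \<sigma> j)" for j
  have "\<not> inj_on \<sigma> {0..p}"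
  proof
    assume "inj_on \<sigma> {0..p}"
    then have "card (\<sigma> ` {0..p}) = p + 1" by (simp add: card_image)
    moreover have "\<sigma> ` {0..p} \<subseteq> {0..<p}" using \<sigma>lt by auto
    then have "card (\<sigma> ` {0..p}) \<le> p" using card_mono[of "{0..<p}"] by fastforce
    ultimately show False by simp
  qed
  then obtain i j where ij: "i \<in> {0..p}" "j \<in> {0..p}" "i \<noteq> j" "\<sigma> i = \<sigma> j"
    unfolding inj_on_def by blast
  have "\<exists>j. P j"
  proof (cases "i < j")
    case True then show ?thesis using ij unfolding P_def by auto
  next
    case False then have "j < i" using ij by simp
    then show ?thesis using ij unfolding P_def by (intro exI[of _ i]) auto
  qed
  define j0 where "j0 = (LEAST j. P j)"
  have Pj0: "P j0" unfolding j0_def using \<open>\<exists>j. P j\<close> by (metis LeastI)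
  then obtain i0 where i0: "i0 < j0" "\<sigma> i0 = \<sigma> j0" unfolding P_def by blast
  have dist: "\<forall>k1 k2. k1 < k2 \<longrightarrow> k2 < j0 \<longrightarrow> \<sigma> k1 \<noteq> \<sigma> k2"
  proof (intro allI impI)
    fix k1 k2 assume k: "k1 < k2" "k2 < j0"
    show "\<sigma> k1 \<noteq> \<sigma> k2"
    proof
      assume "\<sigma> k1 = \<sigma> k2"
      then have "P k2" using k Pj0 unfolding P_def by auto
      then have "j0 \<le> k2" unfolding j0_def by (rule Least_le)
      then show False using k by simp
    qed
  qed
  show ?thesis using i0 dist Pj0 unfolding P_def \<sigma>_def by blast
qed

lemma rotations:
  assumes zc: "set zs \<subseteq> carrier G" and ne: "zs \<noteq> []" and b0: "beta (lp zs) = 0" and n1: "lp zs \<noteq> \<one>"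
    and dist: "\<And>k1 k2. k1 < k2 \<Longrightarrow> k2 < length zs \<Longrightarrow> beta (lp (take k1 zs)) \<noteq> beta (lp (take k2 zs))"
  shows "card ((\<lambda>k. lp (drop k zs @ take k zs)) ` {0..<length zs}) = length zs"
    and "(\<lambda>k. lp (drop k zs @ take k zs)) ` {0..<length zs} \<subseteq> NN"
proof -
  obtain c where c: "lp zs = y [^] (c::int)" using beta_zero[OF lp_closed[OF zc] b0] by blast
  have cm: "\<not> int m dvd c" using n1 c y_one_iff by simp
  have tc: "set (take k zs) \<subseteq> carrier G" "set (drop k zs) \<subseteq> carrier G" for k
    using zc set_take_subset set_drop_subset by (metis subset_trans)+
  have rot: "lp (drop k zs @ take k zs) = y [^] (r ^ beta (lp (take k zs)) * c)" for k
  proof -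
    define P where "P = lp (take k zs)"
    define D where "D = lp (drop k zs)"
    have PD: "P \<in> carrier G" "D \<in> carrier G" unfolding P_def D_def using tc lp_closed by auto
    have "P \<otimes> D = y [^] c" unfolding P_def D_def using c lp_append[OF tc(1) tc(2)]
      by (metis append_take_drop_id)
    then have "D = inv P \<otimes> y [^] c" using PD y_c by (metis cancel2)
    then have "lp (drop k zs @ take k zs) = inv P \<otimes> y [^] c \<otimes> P"
      using lp_append[OF tc(2) tc(1)] unfolding P_def D_def by simp
    also have "\<dots> = y [^] (r ^ beta P * c)" using conj_gen[OF PD(1)] by simp
    finally show ?thesis unfolding P_def .
  qed
  show "(\<lambda>k. lp (drop k zs @ take k zs)) ` {0..<length zs} \<subseteq> NN"
    unfolding NN_def using rot by auto
  have "inj_on (\<lambda>k. lp (drop k zs @ take k zs)) {0..<length zs}"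
  proof (rule inj_onI)
    fix k1 k2 assume k: "k1 \<in> {0..<length zs}" "k2 \<in> {0..<length zs}"
      and e: "lp (drop k1 zs @ take k1 zs) = lp (drop k2 zs @ take k2 zs)"
    define b1 where "b1 = beta (lp (take k1 zs))"
    define b2 where "b2 = beta (lp (take k2 zs))"
    have blt: "b1 < p" "b2 < p" unfolding b1_def b2_def using beta_ex lp_closed tc by blast+
    have "y [^] (r ^ b1 * c) = y [^] (r ^ b2 * c)" using e rot unfolding b1_def b2_def by simp
    then have "y [^] (r ^ b1 * c - r ^ b2 * c) = \<one>" using y_c by (simp add: int_pow_diff)
    then have "int m dvd c * r ^ b1 - c * r ^ b2" using y_one_iff by (simp add: mult.commute)
    then have "b1 = b2" using key_nt blt cm by blast
    then show "k1 = k2" using dist k unfolding b1_def b2_def by (metis atLeastLessThan_iff linorder_neqE_nat)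
  qed
  then show "card ((\<lambda>k. lp (drop k zs @ take k zs)) ` {0..<length zs}) = length zs"
    by (simp add: card_image)
qed

end



context frob
begin

lemma pof_sub: "product_one_free G S \<Longrightarrow> S' \<subseteq># S \<Longrightarrow> product_one_free G S'"
  unfolding product_one_free_def by (meson subset_mset.order_trans)

lemma pof_contra: "product_one_free G S \<Longrightarrow> xs \<noteq> [] \<Longrightarrow> mset xs \<subseteq># S \<Longrightarrow> lp xs \<noteq> \<one>"
  unfolding product_one_free_def product_one_def by auto

lemma main:
  "set_mset S \<subseteq> carrier G \<Longrightarrow> product_one_free G S \<Longrightarrow>
   \<exists>Y. Y \<subseteq> NN \<and> finite Y \<and> \<one> \<in> Y \<and> size S + 2 \<le> p + card Y \<and>
       (\<forall>a\<in>Y. a = \<one> \<or> (\<exists>xs. xs \<noteq> [] \<and> mset xs \<subseteq># S \<and> lp xs = a))"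
proof (induction "size S" arbitrary: S rule: less_induct)
  case less
  show ?case
  proof (cases "size S < p")
    case True
    then show ?thesis using NN_one by (intro exI[of _ "{\<one>}"]) auto
  next
    case False
    obtain ls where ls: "mset ls = S" using ex_mset by blast
    have lsc: "set ls \<subseteq> carrier G" using ls less.prems(1) by auto
    have "p \<le> length ls" using False ls by auto
    then obtain i j where ij: "i < j" "j \<le> p" "beta (lp (take i ls)) = beta (lp (take j ls))"
      "\<forall>k1 k2. k1 < k2 \<longrightarrow> k2 < j \<longrightarrow> beta (lp (take k1 ls)) \<noteq> beta (lp (take k2 ls))"
      using block_exists[OF lsc] by blast
    have jl: "j \<le> length ls" using ij \<open>p \<le> length ls\<close> by simp
    define zs where "zs = take (j - i) (drop i ls)"
    have lzs: "length zs = j - i" unfolding zs_def using ij jl by simp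
    have zsne: "zs \<noteq> []" using lzs ij by auto
    have zsc: "set zs \<subseteq> carrier G" unfolding zs_def using lsc
      by (meson set_drop_subset set_take_subset subset_trans)
    have zsS: "mset zs \<subseteq># S" unfolding zs_def ls[symmetric]
      using mset_take_sub mset_drop_sub subset_mset.order_trans by blast
    have tic: "set (take i ls) \<subseteq> carrier G" using lsc by (meson set_take_subset subset_trans)
    have tk: "take (i + k) ls = take i ls @ take k zs" if "k \<le> j - i" for k
      unfolding zs_def using that by (simp add: take_add min_def)
    have sig: "beta (lp (take (i + k) ls)) = (beta (lp (take i ls)) + beta (lp (take k zs))) mod p"
      if "k \<le> j - i" for k
    proof -
      have "set (take k zs) \<subseteq> carrier G" using zsc by (meson set_take_subset subset_trans)
      then show ?thesis unfolding tk[OF that] using lp_append[OF tic] beta_mult lp_closed tic by simp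
    qed
    have blt: "beta (lp xs) < p" if "set xs \<subseteq> carrier G" for xs using beta_ex lp_closed that by blast
    have tkc: "set (take k zs) \<subseteq> carrier G" for k using zsc by (meson set_take_subset subset_trans)
    have b0: "beta (lp zs) = 0"
    proof -
      have "take (j - i) zs = zs" using lzs by simp
      then have "beta (lp (take j ls)) = (beta (lp (take i ls)) + beta (lp zs)) mod p"
        using sig[of "j - i"] ij by simp
      then have "(beta (lp (take i ls)) + beta (lp zs)) mod p = beta (lp (take i ls))" using ij(3) by simp
      then show ?thesis using mod_add_self_eq blt[OF tic] blt[OF zsc] by blast
    qed
    have dist: "beta (lp (take k1 zs)) \<noteq> beta (lp (take k2 zs))" if "k1 < k2" "k2 < length zs" for k1 k2
    proof
      assume "beta (lp (take k1 zs)) = beta (lp (take k2 zs))"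
      then have "beta (lp (take (i + k1) ls)) = beta (lp (take (i + k2) ls))"
        using sig[of k1] sig[of k2] that lzs by simp
      moreover have "i + k1 < i + k2" "i + k2 < j" using that lzs by linarith+
      ultimately show False using ij(4) by blast
    qed
    have n1: "lp zs \<noteq> \<one>" using pof_contra[OF less.prems(2) zsne zsS] .
    define X where "X = (\<lambda>k. lp (drop k zs @ take k zs)) ` {0..<length zs}"
    have cX: "card X = length zs" and XN: "X \<subseteq> NN"
      using rotations[OF zsc zsne b0 n1 dist] unfolding X_def by auto
    have Xrot: "\<exists>rs. rs \<noteq> [] \<and> mset rs = mset zs \<and> lp rs = b" if bX0: "b \<in> X" for b
    proof -
      obtain k where "b = lp (drop k zs @ take k zs)" using bX0 unfolding X_def by blast
      moreover have "drop k zs @ take k zs \<noteq> []" using zsne by (cases "k < length zs") auto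
      moreover have "mset (drop k zs @ take k zs) = mset zs"
        by (metis append_take_drop_id mset_append add.commute)
      ultimately show ?thesis by blast
    qed
    have X1: "\<one> \<notin> X"
    proof
      assume "\<one> \<in> X"
      then obtain rs where "rs \<noteq> []" "mset rs = mset zs" "lp rs = \<one>" using Xrot by blast
      then show False using pof_contra[OF less.prems(2)] zsS by metis
    qed
    define S' where "S' = S - mset zs"
    have SS': "S = S' + mset zs" unfolding S'_def using zsS by simp
    have sizeS': "size S' < size S" using SS' zsne by simp
    have S'c: "set_mset S' \<subseteq> carrier G" using less.prems(1) SS' by auto
    have S'f: "product_one_free G S'" using pof_sub[OF less.prems(2)] SS' by simp
    obtain Y' where Y': "Y' \<subseteq> NN" "finite Y'" "\<one> \<in> Y'" "size S' + 2 \<le> p + card Y'"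
      "\<forall>a\<in>Y'. a = \<one> \<or> (\<exists>xs. xs \<noteq> [] \<and> mset xs \<subseteq># S' \<and> lp xs = a)"
      using less.hyps[OF sizeS' S'c S'f] by blast
    define B where "B = insert \<one> X"
    have finX: "finite X" unfolding X_def by simp
    have cB: "card B = length zs + 1" unfolding B_def using cX X1 finX by simp
    have BN: "B \<subseteq> NN" unfolding B_def using XN NN_one by simp
    have cond: "\<forall>a\<in>Y'. \<forall>b\<in>B. a \<otimes> b = \<one> \<longrightarrow> a = \<one> \<and> b = \<one>"
    proof (intro ballI impI)
      fix a b assume a: "a \<in> Y'" and b: "b \<in> B" and e: "a \<otimes> b = \<one>"
      have ac: "a \<in> carrier G" using a Y'(1) NN_carrier by blast
      show "a = \<one> \<and> b = \<one>"
      proof (cases "b = \<one>")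
        case True then show ?thesis using e ac by simp
      next
        case False
        then have bX: "b \<in> X" using b unfolding B_def by simp
        then obtain rs where rs: "rs \<noteq> []" "mset rs = mset zs" "lp rs = b" using Xrot by blast
        have rsc: "set rs \<subseteq> carrier G" using zsc rs(2) by (metis set_mset_mset)
        show ?thesis
        proof (cases "a = \<one>")
          case True
          then have "b = \<one>" using e rs lp_closed[OF rsc] by simp
          then show ?thesis using X1 bX by simp
        next
          case False
          then obtain xs where xs: "xs \<noteq> []" "mset xs \<subseteq># S'" "lp xs = a" using Y'(5) a by blast
          have xsc: "set xs \<subseteq> carrier G" using xs(2) S'c
            by (metis mset_subset_eqD set_mset_mset subset_iff)
          have "lp (xs @ rs) = \<one>" using lp_append[OF xsc rsc] xs rs e by simp
          moreover have "mset (xs @ rs) \<subseteq># S" using xs(2) rs(2) SS' by (simp add: subset_mset.add_right_mono)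
          ultimately show ?thesis using pof_contra[OF less.prems(2)] xs(1) by blast
        qed
      qed
    qed
    have sch: "card Y' + card B \<le> card (smul Y' B) + 1"
    proof -
      have "finite B" "\<one> \<in> B" unfolding B_def using finX by simp_all
      then show ?thesis using scherk[OF _ Y'(2) Y'(1) BN Y'(3) _ cond] by blast
    qed
    define Y where "Y = smul Y' B"
    have YN: "Y \<subseteq> NN" unfolding Y_def using Y'(1) BN NN_mult smul_elim by blast
    have Yf: "finite Y" unfolding Y_def using Y'(2) finX B_def smul_finite by simp
    have Y1: "\<one> \<in> Y" unfolding Y_def using smul_mem[OF Y'(3), of \<one> B] B_def by simp
    have sizeS: "size S = size S' + length zs" using SS' by simp
    have inv: "\<forall>a\<in>Y. a = \<one> \<or> (\<exists>xs. xs \<noteq> [] \<and> mset xs \<subseteq># S \<and> lp xs = a)"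
    proof
      fix c assume "c \<in> Y"
      then obtain a b where a: "a \<in> Y'" and b: "b \<in> B" and c: "c = a \<otimes> b"
        unfolding Y_def using smul_elim by blast
      have ac: "a \<in> carrier G" using a Y'(1) NN_carrier by blast
      show "c = \<one> \<or> (\<exists>xs. xs \<noteq> [] \<and> mset xs \<subseteq># S \<and> lp xs = c)"
      proof (cases "b = \<one>")
        case True
        then have "c = a" using c ac by simp
        have S'S: "S' \<subseteq># S" using SS' by simp
        show ?thesis
        proof (cases "a = \<one>")
          case True then show ?thesis using \<open>c = a\<close> by simp
        next
          case False
          then obtain xs where "xs \<noteq> []" "mset xs \<subseteq># S'" "lp xs = a" using Y'(5) a by blast
          then show ?thesis using \<open>c = a\<close> S'S subset_mset.order_trans by blast
        qed
      next
        case False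
        then have bX: "b \<in> X" using b unfolding B_def by simp
        then obtain rs where rs: "rs \<noteq> []" "mset rs = mset zs" "lp rs = b" using Xrot by blast
        have rsc: "set rs \<subseteq> carrier G" using zsc rs(2) by (metis set_mset_mset)
        show ?thesis
        proof (cases "a = \<one>")
          case True
          then have "c = lp rs" using c rs lp_closed[OF rsc] by simp
          then show ?thesis using rs zsS by (intro disjI2 exI[of _ rs]) simp
        next
          case False
          then obtain xs where xs: "xs \<noteq> []" "mset xs \<subseteq># S'" "lp xs = a" using Y'(5) a by blast
          have xsc: "set xs \<subseteq> carrier G" using xs(2) S'c
            by (metis mset_subset_eqD set_mset_mset subset_iff)
          have "lp (xs @ rs) = c" using lp_append[OF xsc rsc] xs rs c by simp
          moreover have "mset (xs @ rs) \<subseteq># S" using xs(2) rs(2) SS' by (simp add: subset_mset.add_right_mono)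
          ultimately show ?thesis using xs(1) by blast
        qed
      qed
    qed
    have "size S + 2 \<le> p + card Y" using sch cB Y'(4) sizeS unfolding Y_def by linarith
    then show ?thesis using YN Yf Y1 inv by blast
  qed
qed

lemma upper: "set_mset S \<subseteq> carrier G \<Longrightarrow> product_one_free G S \<Longrightarrow> size S \<le> m + p - 2"
proof -
  assume "set_mset S \<subseteq> carrier G" "product_one_free G S"
  then obtain Y where "Y \<subseteq> NN" "size S + 2 \<le> p + card Y" using main by blast
  moreover have "card Y \<le> card NN"
    using \<open>Y \<subseteq> NN\<close> card_mono[OF finite_subset[OF NN_carrier fin]] by blast
  ultimately show ?thesis using NN_card by linarith
qed

end



context frob
begin

lemma x_ne_y: "x \<noteq> y"
proof
  assume "x = y"
  then have "beta x = beta (y [^] (1::int))" using y_c by simp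
  then show False using beta_x beta_y by simp
qed

lemma sum_beta_xy: "set xs \<subseteq> {x, y} \<Longrightarrow> sum_list (map beta xs) = count (mset xs) x"
proof (induction xs)
  case Nil then show ?case by simp
next
  case (Cons a xs)
  then have "a = x \<or> a = y" by simp
  then show ?case
  proof
    assume "a = x" then show ?thesis using Cons beta_x by simp
  next
    assume "a = y"
    moreover have "beta y = 0" using beta_y[of 1] y_c by simp
    ultimately show ?thesis using Cons x_ne_y by simp
  qed
qed

definition S0 where "S0 = replicate_mset (m - 1) y + replicate_mset (p - 1) x"

lemma S0_pof: "product_one_free G S0"
  unfolding product_one_free_def product_one_def
proof (intro allI impI notI)
  fix T assume T: "T \<subseteq># S0 \<and> T \<noteq> {#}" and "\<exists>xs. mset xs = T \<and> lp xs = \<one>"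
  then obtain xs where xs: "mset xs = T" "lp xs = \<one>" by blast
  have setS0: "set_mset S0 \<subseteq> {x, y}" unfolding S0_def by (auto split: if_splits)
  have sxs: "set xs \<subseteq> {x, y}" using T xs setS0 by (metis mset_subset_eqD set_mset_mset subset_iff)
  have xsc: "set xs \<subseteq> carrier G" using sxs x_c y_c by auto
  have cx: "count T x \<le> p - 1" using T mset_subset_eq_count[of T S0 x] x_ne_y unfolding S0_def by simp
  have "beta (lp xs) = count T x mod p" using beta_lp[OF xsc] sum_beta_xy[OF sxs] xs(1) by simp
  also have "\<dots> = count T x" using cx p_gt1 by simp
  finally have "count T x = 0" using xs(2) beta_one by simp
  then have "x \<notin> set xs" using xs(1) by (metis count_mset_0_iff)
  then have ally: "\<forall>z\<in>set xs. z = y" using sxs by auto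
  then have rep: "xs = replicate (length xs) y" by (simp add: replicate_length_same)
  have "count T y = length xs" using xs(1) rep by (metis count_replicate_mset mset_replicate)
  moreover have "count T y \<le> m - 1" using T mset_subset_eq_count[of T S0 y] x_ne_y unfolding S0_def by simp
  ultimately have lm: "length xs < m" using m_pos by simp
  have l0: "0 < length xs" using T xs(1) by (cases xs) auto
  have "y [^] (int (length xs)) = \<one>" using xs(2) rep lp_replicate[OF y_c] by (metis int_pow_int)
  then have "int m dvd int (length xs)" using y_one_iff by blast
  then have "m dvd length xs" by simp
  then show False using lm l0 by (simp add: nat_dvd_not_less)
qed

lemma final: "small_davenport G = m + p - 2"
  unfolding small_davenport_def
proof (rule Greatest_equality)
  show "\<exists>S. set_mset S \<subseteq> carrier G \<and> size S = m + p - 2 \<and> product_one_free G S"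
  proof (intro exI conjI)
    show "set_mset S0 \<subseteq> carrier G" unfolding S0_def using x_c y_c by (auto split: if_splits)
    show "size S0 = m + p - 2" unfolding S0_def using m_pos p_gt1 by simp
    show "product_one_free G S0" by (rule S0_pof)
  qed
next
  fix l assume "\<exists>S. set_mset S \<subseteq> carrier G \<and> size S = l \<and> product_one_free G S"
  then show "l \<le> m + p - 2" using upper by blast
qed

end

theorem proposition3p5:
  fixes G :: "('a, 'b) monoid_scheme" and p m :: nat and r :: int and x y :: 'a
  assumes "group G"
    and "prime p" and "m \<ge> 1" and "[r ^ p = 1] (mod int m)"
    and "x \<in> carrier G" and "y \<in> carrier G"
    and "generate G {x, y} = carrier G"
    and "x [^]\<^bsub>G\<^esub> p = \<one>\<^bsub>G\<^esub>" and "y [^]\<^bsub>G\<^esub> m = \<one>\<^bsub>G\<^esub>"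
    and "inv\<^bsub>G\<^esub> x \<otimes>\<^bsub>G\<^esub> y \<otimes>\<^bsub>G\<^esub> x = y [^]\<^bsub>G\<^esub> r"
    and "finite (carrier G)" and "card (carrier G) = p * m"
    and "\<forall>q. prime q \<and> q dvd card (carrier G) \<longrightarrow> p \<le> q"
    and "gcd (int p * (r - 1)) (int m) = 1"
  shows "small_davenport G = m + p - 2"
proof -
  have "frob G p m r x y" unfolding frob_def frob_axioms_def using assms by blast
  then show ?thesis by (rule frob.final)
qed


end
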